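(* Let $D$ be a digraph. (1) If for every integer $k\geq3$ there is a colouring of the vertices of $D$ with countably many colours admitting no monochromatic copy of $\vec C_k$, then $\chi(D)\leq 2^{\omega}$. (2) The arc set of $D$ can be partitioned into two sets $E_0,E_1$ such that neither $(V(D),E_0)$ nor $(V(D),E_1)$ contains a directed cycle.
   Context: A digraph is a pair $D=(V,E)$ with $E\subseteq V^2$ such that $uv\in E$ implies $vu\notin E$. $\vec C_k$ is the directed cycle on $k$ vertices. The dichromatic number $\chi(D)$ is the minimal number of acyclic vertex sets (sets inducing no directed cycle) covering $V(D)$. *)

theory Defs
  imports Main
begin

definition is_digraph :: "'a set \<Rightarrow> ('a \<times> 'a) set \<Rightarrow> bool" where
  "is_digraph V E \<longleftrightarrow> E \<subseteq> V \<times> V \<and> (\<forall>u v. (u, v) \<in> E \<longrightarrow> (v, u) \<notin> E)"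

definition dicycle_copy :: "('a \<times> 'a) set \<Rightarrow> 'a set \<Rightarrow> nat \<Rightarrow> (nat \<Rightarrow> 'a) \<Rightarrow> bool" where
  "dicycle_copy E S k f \<longleftrightarrow> k \<ge> 1 \<and> inj_on f {..<k} \<and>
     (\<forall>i<k. f i \<in> S \<and> (f i, f (Suc i mod k)) \<in> E)"

definition acyclic_set :: "('a \<times> 'a) set \<Rightarrow> 'a set \<Rightarrow> bool" where
  "acyclic_set E S \<longleftrightarrow> \<not> (\<exists>k f. dicycle_copy E S k f)"

definition mono_dicycle :: "'a set \<Rightarrow> ('a \<times> 'a) set \<Rightarrow> ('a \<Rightarrow> 'c) \<Rightarrow> nat \<Rightarrow> bool" where
  "mono_dicycle V E c k \<longleftrightarrow> (\<exists>f. dicycle_copy E V k f \<and> (\<forall>i<k. c (f i) = c (f 0)))"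

end

theory Submission
  imports Defs "HOL-Library.Nat_Bijection"
begin

lemma acyc_from_order:
  assumes tr: "trans P" and ir: "irrefl P" and sub: "E' \<subseteq> P"
  shows "acyclic_set E' S"
  unfolding acyclic_set_def
proof
  assume "\<exists>k f. dicycle_copy E' S k f"
  then obtain k f where d: "dicycle_copy E' S k f" by blast
  hence k1: "k \<ge> 1" and ar: "\<And>i. i < k \<Longrightarrow> (f i, f (Suc i mod k)) \<in> P"
    using sub unfolding dicycle_copy_def by auto
  have "\<And>i. 1 \<le> i \<Longrightarrow> i \<le> k \<Longrightarrow> (f 0, f (i mod k)) \<in> P"
  proof -
    fix i :: nat assume "1 \<le> i" "i \<le> k"
    thus "(f 0, f (i mod k)) \<in> P"
    proof (induction i rule: dec_induct)
      case base thus ?case using ar[of 0] k1 by simp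
    next
      case (step n)
      have "n mod k = n" using step by simp
      hence "(f n, f (Suc n mod k)) \<in> P" using ar[of n] step by simp
      moreover have "(f 0, f n) \<in> P" using step \<open>n mod k = n\<close> by simp
      ultimately show ?case using tr by (meson transD)
    qed
  qed
  from this[of k] k1 have "(f 0, f 0) \<in> P" by simp
  with ir show False by (simp add: irrefl_def)
qed

lemma part2:
  assumes "is_digraph V E"
  shows "\<exists>E0 E1. E0 \<union> E1 = E \<and> E0 \<inter> E1 = {} \<and> acyclic_set E0 V \<and> acyclic_set E1 V"
proof -
  obtain r :: "'a rel" where wo: "well_order_on UNIV r" using well_order_on by (rule exE)
  hence lin: "linear_order_on UNIV r" by (simp add: well_order_on_def)
  define P where "P = r - Id"
  have trr: "trans r" and asr: "antisym r" and totr: "total_on UNIV r"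
    using lin unfolding linear_order_on_def partial_order_on_def preorder_on_def
    by (simp_all add: trans_on_def trans_def antisym_on_def antisym_def)
  have trP: "trans P" unfolding trans_def
  proof (intro allI impI)
    fix x y z assume a: "(x, y) \<in> P" "(y, z) \<in> P"
    hence "(x, z) \<in> r" using trr unfolding P_def by (meson DiffD1 transD)
    moreover have "x \<noteq> z"
    proof
      assume "x = z"
      with a have "(x, y) \<in> r" "(y, x) \<in> r" "x \<noteq> y" unfolding P_def by auto
      with asr show False by (meson antisymD)
    qed
    ultimately show "(x, z) \<in> P" unfolding P_def by simp
  qed
  have irP: "irrefl P" unfolding P_def irrefl_def by blast
  have tot: "\<And>u v. u \<noteq> v \<Longrightarrow> (u, v) \<in> P \<or> (v, u) \<in> P"
    using totr unfolding P_def total_on_def by simp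
  have noloop: "\<And>u v. (u, v) \<in> E \<Longrightarrow> u \<noteq> v" using assms unfolding is_digraph_def by auto
  define E0 where "E0 = E \<inter> P"
  define E1 where "E1 = E - E0"
  have "E1 \<subseteq> P\<inverse>"
  proof
    fix p assume "p \<in> E1"
    then obtain u v where p: "p = (u, v)" "(u, v) \<in> E" "(u, v) \<notin> P" unfolding E1_def E0_def by (cases p) auto
    thus "p \<in> P\<inverse>" using tot[of u v] noloop[of u v] by auto
  qed
  moreover have "trans (P\<inverse>)" using trP by (simp add: trans_def)
  moreover have "irrefl (P\<inverse>)" using irP by (simp add: irrefl_def)
  ultimately have a1: "acyclic_set E1 V" by (intro acyc_from_order[of "P\<inverse>"])
  have a0: "acyclic_set E0 V" by (rule acyc_from_order[OF trP irP]) (simp add: E0_def)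
  have "E0 \<union> E1 = E" "E0 \<inter> E1 = {}" unfolding E1_def E0_def by auto
  with a0 a1 show ?thesis by blast
qed


lemma part1:
  assumes dg: "is_digraph V E" and h: "\<forall>k\<ge>3. \<exists>c :: 'a \<Rightarrow> nat. \<not> mono_dicycle V E c k"
  shows "\<exists>c :: 'a \<Rightarrow> nat set. \<forall>x. acyclic_set E {v \<in> V. c v = x}"
proof -
  define C where "C k = (SOME c :: 'a \<Rightarrow> nat. \<not> mono_dicycle V E c k)" for k
  have C: "\<not> mono_dicycle V E (C k) k" if "k \<ge> 3" for k
  proof -
    from h that have "\<exists>c :: 'a \<Rightarrow> nat. \<not> mono_dicycle V E c k" by simp
    thus ?thesis unfolding C_def by (rule someI_ex)
  qed
  define c where "c v = {prod_encode (k, C k v) | k. k \<ge> 3}" for v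
  have ceq: "C k v = C k w" if "c v = c w" "k \<ge> 3" for v w k
  proof -
    have "prod_encode (k, C k v) \<in> c w" using that unfolding c_def by blast
    then obtain k' where "prod_encode (k, C k v) = prod_encode (k', C k' w)"
      unfolding c_def by blast
    thus ?thesis using inj_prod_encode by (metis Pair_inject injD)
  qed
  have "acyclic_set E {v \<in> V. c v = x}" for x
    unfolding acyclic_set_def
  proof
    assume "\<exists>k f. dicycle_copy E {v \<in> V. c v = x} k f"
    then obtain k f where d: "dicycle_copy E {v \<in> V. c v = x} k f" by blast
    hence k1: "k \<ge> 1" and inj: "inj_on f {..<k}"
      and ar: "\<And>i. i < k \<Longrightarrow> f i \<in> V \<and> c (f i) = x \<and> (f i, f (Suc i mod k)) \<in> E"
      unfolding dicycle_copy_def by auto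
    have asym: "\<And>u v. (u, v) \<in> E \<Longrightarrow> (v, u) \<notin> E" using dg unfolding is_digraph_def by blast
    show False
    proof (cases "k \<ge> 3")
      case True
      have "dicycle_copy E V k f" using d ar unfolding dicycle_copy_def by auto
      moreover have "\<forall>i<k. C k (f i) = C k (f 0)"
      proof (intro allI impI)
        fix i assume "i < k"
        hence "c (f i) = c (f 0)" using ar[of i] ar[of 0] k1 by simp
        thus "C k (f i) = C k (f 0)" using ceq True by blast
      qed
      ultimately have "mono_dicycle V E (C k) k" unfolding mono_dicycle_def by blast
      with C True show False by blast
    next
      case False
      hence "k = 1 \<or> k = 2" using k1 by auto
      thus False
      proof
        assume "k = 1" thus False using ar[of 0] asym by auto
      next
        assume "k = 2" thus False using ar[of 0] ar[of 1] asym by auto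
      qed
    qed
  qed
  thus ?thesis by blast
qed

theorem mainTheorem19:
  fixes V :: "'a set" and E :: "('a \<times> 'a) set"
  assumes "is_digraph V E"
  shows "((\<forall>k\<ge>3. \<exists>c :: 'a \<Rightarrow> nat. \<not> mono_dicycle V E c k)
           \<longrightarrow> (\<exists>c :: 'a \<Rightarrow> nat set. \<forall>x. acyclic_set E {v \<in> V. c v = x}))
       \<and> (\<exists>E0 E1. E0 \<union> E1 = E \<and> E0 \<inter> E1 = {} \<and> acyclic_set E0 V \<and> acyclic_set E1 V)"
  using part1[OF assms] part2[OF assms] by blast

end
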